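(* In an operational probabilistic theory with finite-dimensional transformation spaces and convex, closed sets of transformations, if $\chi$ is the unique invariant state of system $\mathrm{A}$, then $\chi$ is internal: for every $\omega\in\mathsf{St}_1(\mathrm{A})$ there exist $p\in(0,1]$ and $\omega_C\in\mathsf{St}_1(\mathrm{A})$ with $\chi=p\,\omega+(1-p)\,\omega_C$.
   Context: $\mathsf{St}_1(\mathrm{A})$ is the set of deterministic (normalized) states of $\mathrm{A}$; $\mathsf{G}_{\mathrm{A}}$ is the group of reversible transformations of $\mathrm{A}$ (a compact group under the standing assumptions). A state $\chi\in\mathsf{St}_1(\mathrm{A})$ is invariant if $\mathcal{U}\chi=\chi$ for all $\mathcal{U}\in\mathsf{G}_{\mathrm{A}}$. *)

theory Defs
  imports "HOL-Analysis.Analysis"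
begin

text \<open>The deterministic states St1 form a subset of a finite-dimensional real vector
  space 'v; the reversible transformations form a set G of linear maps on 'v.\<close>

definition reversible_group :: "('v::euclidean_space \<Rightarrow>\<^sub>L 'v) set \<Rightarrow> 'v set \<Rightarrow> bool" where
  "reversible_group G St1 \<longleftrightarrow>
     id_blinfun \<in> G \<and>
     (\<forall>U\<in>G. \<forall>V\<in>G. U o\<^sub>L V \<in> G) \<and>
     (\<forall>U\<in>G. \<exists>V\<in>G. V o\<^sub>L U = id_blinfun \<and> U o\<^sub>L V = id_blinfun) \<and>
     (\<forall>U\<in>G. blinfun_apply U ` St1 = St1) \<and>
     compact G"

definition invariant_state :: "('v::euclidean_space \<Rightarrow>\<^sub>L 'v) set \<Rightarrow> 'v set \<Rightarrow> 'v \<Rightarrow> bool" where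
  "invariant_state G St1 chi \<longleftrightarrow> chi \<in> St1 \<and> (\<forall>U\<in>G. blinfun_apply U chi = chi)"

definition internal_state :: "'v::real_vector set \<Rightarrow> 'v \<Rightarrow> bool" where
  "internal_state St1 chi \<longleftrightarrow>
     (\<forall>\<omega>\<in>St1. \<exists>p \<omega>C. 0 < p \<and> p \<le> 1 \<and> \<omega>C \<in> St1 \<and> chi = p *\<^sub>R \<omega> + (1 - p) *\<^sub>R \<omega>C)"

end

theory Submission
  imports Defs
begin

lemma sq_convex_ineq:
  fixes u v t :: real
  assumes "0 \<le> t" "t \<le> 1"
  shows "(t * u + (1 - t) * v)^2 \<le> t * u^2 + (1 - t) * v^2"
proof -
  have "t * u^2 + (1 - t) * v^2 - (t * u + (1 - t) * v)^2 = t * (1 - t) * (u - v)^2"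
    by (simp add: power2_eq_square algebra_simps)
  moreover have "t * (1 - t) * (u - v)^2 \<ge> 0" using assms by simp
  ultimately show ?thesis by linarith
qed

lemma norm_sq_convex:
  fixes a b :: "'a::real_normed_vector"
  assumes "0 \<le> t" "t \<le> 1"
  shows "(norm (t *\<^sub>R a + (1 - t) *\<^sub>R b))^2 \<le> t * (norm a)^2 + (1 - t) * (norm b)^2"
proof -
  have "norm (t *\<^sub>R a + (1 - t) *\<^sub>R b) \<le> t * norm a + (1 - t) * norm b"
    using norm_triangle_ineq[of "t *\<^sub>R a" "(1 - t) *\<^sub>R b"] assms by simp
  then have "(norm (t *\<^sub>R a + (1 - t) *\<^sub>R b))^2 \<le> (t * norm a + (1 - t) * norm b)^2"
    by (simp add: power_mono)
  also have "\<dots> \<le> t * (norm a)^2 + (1 - t) * (norm b)^2" by (rule sq_convex_ineq[OF assms])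
  finally show ?thesis .
qed

lemma norm_sq_mid_strict:
  fixes a b :: "'a::real_inner"
  assumes "a \<noteq> b"
  shows "(norm ((1/2) *\<^sub>R a + (1/2) *\<^sub>R b))^2 < (1/2) * (norm a)^2 + (1/2) * (norm b)^2"
proof -
  have "(norm ((1/2) *\<^sub>R a + (1/2) *\<^sub>R b))^2 = (1/4) * (norm (a + b))^2"
    by (simp add: scaleR_add_right[symmetric] power2_eq_square)
  moreover have "(norm (a + b))^2 + (norm (a - b))^2 = 2 * (norm a)^2 + 2 * (norm b)^2"
    by (simp add: power2_norm_eq_inner inner_add_left inner_add_right inner_diff_left
        inner_diff_right inner_commute)
  moreover have "norm (a - b) > 0" using assms by simp
  moreover have "(norm (a - b))^2 > 0" using \<open>norm (a - b) > 0\<close> by simp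
  ultimately show ?thesis by linarith
qed

theorem mainTheorem11:
  fixes St1 :: "'v::euclidean_space set"
    and G :: "('v \<Rightarrow>\<^sub>L 'v) set"
    and chi :: 'v
  assumes "convex St1" and "compact St1"
    and "reversible_group G St1"
    and "invariant_state G St1 chi"
    and "\<forall>\<psi>. invariant_state G St1 \<psi> \<longrightarrow> \<psi> = chi"
  shows "internal_state St1 chi"
proof -
  note RG = assms(3)[unfolded reversible_group_def]
  have idG: "id_blinfun \<in> G" and compG: "\<And>U V. U \<in> G \<Longrightarrow> V \<in> G \<Longrightarrow> U o\<^sub>L V \<in> G"
    and invG: "\<And>U. U \<in> G \<Longrightarrow> \<exists>V\<in>G. V o\<^sub>L U = id_blinfun \<and> U o\<^sub>L V = id_blinfun"
    and imG: "\<And>U. U \<in> G \<Longrightarrow> blinfun_apply U ` St1 = St1"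
    and cG: "compact G" using RG by auto
  have chiS: "chi \<in> St1" using assms(4) by (simp add: invariant_state_def)
  have injU: "inj (blinfun_apply U)" if "U \<in> G" for U
  proof -
    from invG[OF that] obtain V where "V \<in> G" "V o\<^sub>L U = id_blinfun" by blast
    then have "\<And>x. V (U x) = x" by (metis blinfun_apply_blinfun_compose id_blinfun.rep_eq id_apply)
    then show ?thesis by (metis injI)
  qed
  define f where "f x = Sup ((\<lambda>U. (norm (blinfun_apply U x))^2) ` G)" for x
  have imcomp: "compact ((\<lambda>U. (norm (blinfun_apply U x))^2) ` G)" for x
    by (rule compact_continuous_image[OF _ cG]) (intro continuous_intros)
  have fge: "(norm (blinfun_apply U x))^2 \<le> f x" if "U \<in> G" for U x
    unfolding f_def using that imcomp[of x]
    by (intro cSup_upper) (auto intro: bounded_imp_bdd_above compact_imp_bounded)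
  have fatt: "\<exists>U\<in>G. f x = (norm (blinfun_apply U x))^2" for x
  proof -
    have "f x \<in> (\<lambda>U. (norm (blinfun_apply U x))^2) ` G"
      unfolding f_def using imcomp[of x] idG
      by (intro closed_contains_Sup) (auto intro: bounded_imp_bdd_above compact_imp_bounded compact_imp_closed)
    then show ?thesis by auto
  qed
  have fconv: "convex_on UNIV f"
  proof (rule convex_onI[OF _ convex_UNIV])
    fix t :: real and x y :: 'v
    assume t: "0 < t" "t < 1"
    obtain U where U: "U \<in> G" "f ((1 - t) *\<^sub>R x + t *\<^sub>R y) = (norm (blinfun_apply U ((1 - t) *\<^sub>R x + t *\<^sub>R y)))^2"
      using fatt by blast
    have "(norm (blinfun_apply U ((1 - t) *\<^sub>R x + t *\<^sub>R y)))^2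
        = (norm ((1 - t) *\<^sub>R blinfun_apply U x + (1 - (1 - t)) *\<^sub>R blinfun_apply U y))^2"
      by (simp add: blinfun.add_right blinfun.scaleR_right)
    also have "\<dots> \<le> (1 - t) * (norm (blinfun_apply U x))^2 + (1 - (1 - t)) * (norm (blinfun_apply U y))^2"
      using t by (intro norm_sq_convex) auto
    also have "\<dots> \<le> (1 - t) * f x + t * f y"
      using t fge[OF U(1), of x] fge[OF U(1), of y]
      by (intro add_mono mult_left_mono) auto
    finally show "f ((1 - t) *\<^sub>R x + t *\<^sub>R y) \<le> (1 - t) * f x + t * f y" using U by simp
  qed
  have fcont: "continuous_on UNIV f" by (rule convex_on_continuous[OF open_UNIV fconv])
  have finv: "f (blinfun_apply V x) \<le> f x" if "V \<in> G" for V x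
  proof -
    obtain U where "U \<in> G" "f (blinfun_apply V x) = (norm (blinfun_apply U (blinfun_apply V x)))^2"
      using fatt by blast
    moreover have "(norm (blinfun_apply (U o\<^sub>L V) x))^2 \<le> f x"
      using compG[OF \<open>U \<in> G\<close> that] by (rule fge)
    ultimately show ?thesis by simp
  qed
  have Sne: "St1 \<noteq> {}" using chiS by auto
  then obtain w0 where w0: "w0 \<in> rel_interior St1"
    using rel_interior_eq_empty[OF assms(1)] by blast
  define Orb where "Orb = (\<lambda>U. blinfun_apply U w0) ` G"
  define K where "K = convex hull Orb"
  have Ocomp: "compact Orb" unfolding Orb_def
    by (rule compact_continuous_image[OF _ cG]) (intro continuous_intros)
  have Kcomp: "compact K" unfolding K_def by (rule compact_convex_hull[OF Ocomp])
  have Kne: "K \<noteq> {}" unfolding K_def Orb_def using idG by auto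
  have Kconv: "convex K" unfolding K_def by simp
  have relU: "blinfun_apply U ` rel_interior St1 = rel_interior St1" if "U \<in> G" for U
    using rel_interior_injective_linear_image[OF blinfun.bounded_linear_right injU[OF that], of St1]
      imG[OF that] by simp
  have OS: "Orb \<subseteq> rel_interior St1" unfolding Orb_def using relU w0 by blast
  have KS: "K \<subseteq> rel_interior St1" unfolding K_def
    using hull_minimal[of Orb "rel_interior St1" convex] OS convex_rel_interior[OF assms(1)] by blast
  have KG: "blinfun_apply V ` K \<subseteq> K" if "V \<in> G" for V
  proof -
    have "blinfun_apply V ` K = convex hull (blinfun_apply V ` Orb)"
      unfolding K_def by (rule convex_hull_linear_image) (simp add: blinfun.bounded_linear_right bounded_linear.linear)
    also have "blinfun_apply V ` Orb \<subseteq> Orb"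
      unfolding Orb_def using compG[OF that] by (auto simp del: blinfun_apply_blinfun_compose) (metis blinfun_apply_blinfun_compose image_eqI)
    then have "convex hull (blinfun_apply V ` Orb) \<subseteq> K" unfolding K_def by (rule hull_mono)
    finally show ?thesis .
  qed
  obtain x0 where x0: "x0 \<in> K" "\<And>y. y \<in> K \<Longrightarrow> f x0 \<le> f y"
    using continuous_attains_inf[OF Kcomp Kne continuous_on_subset[OF fcont]] by blast
  have fixx0: "blinfun_apply V x0 = x0" if V: "V \<in> G" for V
  proof (rule ccontr)
    assume ne: "blinfun_apply V x0 \<noteq> x0"
    define y where "y = blinfun_apply V x0"
    have yK: "y \<in> K" using KG[OF V] x0(1) unfolding y_def by blast
    have fy: "f y \<le> f x0" unfolding y_def by (rule finv[OF V])
    define m where "m = (1/2) *\<^sub>R x0 + (1/2) *\<^sub>R y"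
    have mK: "m \<in> K" unfolding m_def using Kconv x0(1) yK
      by (rule convexD) auto
    obtain U where U: "U \<in> G" "f m = (norm (blinfun_apply U m))^2" using fatt by blast
    have "blinfun_apply U x0 \<noteq> blinfun_apply U y"
      using injU[OF U(1)] ne unfolding y_def by (metis injD)
    then have "(norm ((1/2) *\<^sub>R blinfun_apply U x0 + (1/2) *\<^sub>R blinfun_apply U y))^2
        < (1/2) * (norm (blinfun_apply U x0))^2 + (1/2) * (norm (blinfun_apply U y))^2"
      by (rule norm_sq_mid_strict)
    also have "\<dots> \<le> (1/2) * f x0 + (1/2) * f y"
      using fge[OF U(1), of x0] fge[OF U(1), of y] by simp
    also have "\<dots> \<le> f x0" using fy by simp
    finally have "f m < f x0" using U(2) unfolding m_def
      by (simp add: blinfun.add_right blinfun.scaleR_right)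
    with x0(2)[OF mK] show False by simp
  qed
  have "x0 \<in> St1" using KS x0(1) rel_interior_subset by blast
  then have "invariant_state G St1 x0" using fixx0 by (simp add: invariant_state_def)
  then have "x0 = chi" using assms(5) by blast
  then have chiR: "chi \<in> rel_interior St1" using KS x0(1) by blast
  show ?thesis unfolding internal_state_def
  proof
    fix w assume w: "w \<in> St1"
    obtain e where e: "e > 1" "(1 - e) *\<^sub>R w + e *\<^sub>R chi \<in> St1"
      using convex_rel_interior_iff[OF assms(1) Sne] chiR w by blast
    define p where "p = 1 - 1/e"
    have "chi = p *\<^sub>R w + (1 - p) *\<^sub>R ((1 - e) *\<^sub>R w + e *\<^sub>R chi)"
    proof -
      have "(1 - p) *\<^sub>R ((1 - e) *\<^sub>R w + e *\<^sub>R chi) = ((1 - p) * (1 - e)) *\<^sub>R w + ((1 - p) * e) *\<^sub>R chi"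
        by (simp add: scaleR_add_right)
      also have "(1 - p) * e = 1" using e(1) by (simp add: p_def)
      also have "(1 - p) * (1 - e) = - p" using e(1) by (simp add: p_def field_simps)
      finally show ?thesis by simp
    qed
    moreover have "0 < p" "p \<le> 1" using e(1) by (auto simp: p_def field_simps)
    ultimately show "\<exists>p \<omega>C. 0 < p \<and> p \<le> 1 \<and> \<omega>C \<in> St1 \<and> chi = p *\<^sub>R w + (1 - p) *\<^sub>R \<omega>C"
      using e(2) by blast
  qed
qed

end
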